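(* Let $X$, $Y$ be disjoint sets of cardinality at least two, and let $M\le\mathrm{Sym}(X)$ and $N\le\mathrm{Sym}(Y)$ be nontrivial permutation groups. Then $M\boxtimes N$ is discrete (in the permutation topology of $\mathrm{Sym}(V_Y)$) if and only if $M$ and $N$ are semi-regular.
   Context: A permutation group is semi-regular if every point stabiliser is trivial. A group $G\le\mathrm{Sym}(V)$ is discrete in the permutation topology (pointwise convergence) iff the pointwise stabiliser in $G$ of some finite subset of $V$ is trivial. Let $T$ be the $(|X|,|Y|)$-biregular tree with natural bipartition $VT=V_X\sqcup V_Y$ (vertices in $V_X$ have valency $|X|$, in $V_Y$ valency $|Y|$). $A(v)$, $\overline{A}(v)$ are the sets of arcs with origin, resp. terminus, $v$. A legal colouring is a map $c:AT\to X\cup Y$ restricting to a bijection $A(v)\to X$ for $v\in V_X$, to a bijection $A(v)\to Y$ for $v\in V_Y$, and constant on each $\overline{A}(v)$. $U_c(M,N)$ is the group of $g\in\mathrm{Aut}(T)$ with $gV_X=V_X$ and $c|_{A(gv)}\circ g|_{A(v)}\circ(c|_{A(v)})^{-1}$ in $M$ for $v\in V_X$ and in $N$ for $v\in V_Y$. The box product $M\boxtimes N\le\mathrm{Sym}(V_Y)$ is the group induced on $V_Y$ by $U_c(M,N)$. *)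

theory Defs
  imports Main "HOL-Algebra.Bij" "HOL-Library.Equipollence"
begin

definition simple_graph :: "'v set \<Rightarrow> ('v \<Rightarrow> 'v \<Rightarrow> bool) \<Rightarrow> bool" where
  "simple_graph V E \<longleftrightarrow> (\<forall>u w. E u w \<longrightarrow> u \<in> V \<and> w \<in> V \<and> E w u \<and> u \<noteq> w)"

definition nb_path :: "('v \<Rightarrow> 'v \<Rightarrow> bool) \<Rightarrow> 'v list \<Rightarrow> bool" where
  "nb_path E xs \<longleftrightarrow> xs \<noteq> [] \<and>
     (\<forall>i. Suc i < length xs \<longrightarrow> E (xs ! i) (xs ! Suc i)) \<and>
     (\<forall>i. Suc (Suc i) < length xs \<longrightarrow> xs ! i \<noteq> xs ! Suc (Suc i))"

text \<open>A tree: a nonempty simple graph in which any two vertices are joined by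
  exactly one non-backtracking walk (i.e. connected and without cycles).\<close>
definition is_tree :: "'v set \<Rightarrow> ('v \<Rightarrow> 'v \<Rightarrow> bool) \<Rightarrow> bool" where
  "is_tree V E \<longleftrightarrow> V \<noteq> {} \<and> simple_graph V E \<and>
     (\<forall>u\<in>V. \<forall>w\<in>V. \<exists>!xs. nb_path E xs \<and> hd xs = u \<and> last xs = w)"

definition arcs_out :: "('v \<Rightarrow> 'v \<Rightarrow> bool) \<Rightarrow> 'v \<Rightarrow> ('v \<times> 'v) set" where
  "arcs_out E v = {(v, w) | w. E v w}"

definition arcs_in :: "('v \<Rightarrow> 'v \<Rightarrow> bool) \<Rightarrow> 'v \<Rightarrow> ('v \<times> 'v) set" where
  "arcs_in E v = {(u, v) | u. E u v}"

definition biregular_tree ::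
  "'v set \<Rightarrow> ('v \<Rightarrow> 'v \<Rightarrow> bool) \<Rightarrow> 'v set \<Rightarrow> 'v set \<Rightarrow> 'a set \<Rightarrow> 'a set \<Rightarrow> bool" where
  "biregular_tree V E VX VY X Y \<longleftrightarrow> is_tree V E \<and> VX \<union> VY = V \<and> VX \<inter> VY = {} \<and>
     (\<forall>u w. E u w \<longrightarrow> (u \<in> VX \<longleftrightarrow> w \<in> VY)) \<and>
     (\<forall>v\<in>VX. arcs_out E v \<approx> X) \<and> (\<forall>v\<in>VY. arcs_out E v \<approx> Y)"

definition legal_colouring ::
  "('v \<Rightarrow> 'v \<Rightarrow> bool) \<Rightarrow> 'v set \<Rightarrow> 'v set \<Rightarrow> 'a set \<Rightarrow> 'a set \<Rightarrow> ('v \<times> 'v \<Rightarrow> 'a) \<Rightarrow> bool" where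
  "legal_colouring E VX VY X Y c \<longleftrightarrow>
     (\<forall>v\<in>VX. bij_betw c (arcs_out E v) X) \<and>
     (\<forall>v\<in>VY. bij_betw c (arcs_out E v) Y) \<and>
     (\<forall>v\<in>VX \<union> VY. \<forall>a\<in>arcs_in E v. \<forall>b\<in>arcs_in E v. c a = c b)"

definition tree_aut :: "'v set \<Rightarrow> ('v \<Rightarrow> 'v \<Rightarrow> bool) \<Rightarrow> ('v \<Rightarrow> 'v) set" where
  "tree_aut V E = {g. bij_betw g V V \<and> (\<forall>u\<in>V. \<forall>w\<in>V. E u w \<longleftrightarrow> E (g u) (g w))}"

text \<open>The local action  c|A(gv) \<circ> g|A(v) \<circ> (c|A(v))^{-1}  as a permutation of S
  (extensional outside S, i.e. an element of BijGroup S when it is a bijection).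
  Here g acts on arcs by g(v,w) = (g v, g w).\<close>
definition local_action ::
  "('v \<Rightarrow> 'v \<Rightarrow> bool) \<Rightarrow> ('v \<times> 'v \<Rightarrow> 'a) \<Rightarrow> ('v \<Rightarrow> 'v) \<Rightarrow> 'v \<Rightarrow> 'a set \<Rightarrow> ('a \<Rightarrow> 'a)" where
  "local_action E c g v S =
     (\<lambda>x\<in>S. c (g v, g (snd (the_inv_into (arcs_out E v) c x))))"

definition U_c ::
  "'v set \<Rightarrow> ('v \<Rightarrow> 'v \<Rightarrow> bool) \<Rightarrow> 'v set \<Rightarrow> 'v set \<Rightarrow> 'a set \<Rightarrow> 'a set \<Rightarrow>
   ('v \<times> 'v \<Rightarrow> 'a) \<Rightarrow> ('a \<Rightarrow> 'a) set \<Rightarrow> ('a \<Rightarrow> 'a) set \<Rightarrow> ('v \<Rightarrow> 'v) set" where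
  "U_c V E VX VY X Y c M N =
     {g \<in> tree_aut V E. g ` VX = VX \<and>
        (\<forall>v\<in>VX. local_action E c g v X \<in> M) \<and>
        (\<forall>v\<in>VY. local_action E c g v Y \<in> N)}"

definition box_product ::
  "'v set \<Rightarrow> ('v \<Rightarrow> 'v \<Rightarrow> bool) \<Rightarrow> 'v set \<Rightarrow> 'v set \<Rightarrow> 'a set \<Rightarrow> 'a set \<Rightarrow>
   ('v \<times> 'v \<Rightarrow> 'a) \<Rightarrow> ('a \<Rightarrow> 'a) set \<Rightarrow> ('a \<Rightarrow> 'a) set \<Rightarrow> ('v \<Rightarrow> 'v) set" where
  "box_product V E VX VY X Y c M N = (\<lambda>g. restrict g VY) ` U_c V E VX VY X Y c M N"

text \<open>Discreteness in the permutation topology of Sym(\<Omega>): the pointwise stabiliser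
  of some finite subset of \<Omega> is trivial.\<close>
definition discrete_perm_group :: "('b \<Rightarrow> 'b) set \<Rightarrow> 'b set \<Rightarrow> bool" where
  "discrete_perm_group G \<Omega> \<longleftrightarrow>
     (\<exists>F. finite F \<and> F \<subseteq> \<Omega> \<and>
        (\<forall>h\<in>G. (\<forall>y\<in>F. h y = y) \<longrightarrow> (\<forall>y\<in>\<Omega>. h y = y)))"

definition semiregular :: "('b \<Rightarrow> 'b) set \<Rightarrow> 'b set \<Rightarrow> bool" where
  "semiregular G \<Omega> \<longleftrightarrow>
     (\<forall>x\<in>\<Omega>. \<forall>h\<in>G. h x = x \<longrightarrow> h = \<one>\<^bsub>BijGroup \<Omega>\<^esub>)"

end

theory Submission imports Defs begin

lemma nb_ne: "nb_path E xs \<Longrightarrow> xs \<noteq> []"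
  by (simp add: nb_path_def)

lemma nb_prefix: assumes h: "nb_path E (xs @ ys)" "xs \<noteq> []" shows "nb_path E xs"
  unfolding nb_path_def
proof (intro conjI allI impI)
  show "xs \<noteq> []" by fact
next
  fix i assume i: "Suc i < length xs"
  then have "E ((xs@ys)!i) ((xs@ys)!Suc i)" using h unfolding nb_path_def by auto
  then show "E (xs!i) (xs!Suc i)" using i by (simp add: nth_append)
next
  fix i assume i: "Suc (Suc i) < length xs"
  then have "(xs@ys)!i \<noteq> (xs@ys)!Suc (Suc i)" using h unfolding nb_path_def by auto
  then show "xs!i \<noteq> xs!Suc (Suc i)" using i by (simp add: nth_append)
qed

lemma nb_snoc:
  assumes "nb_path E xs" "E (last xs) y" "2 \<le> length xs \<Longrightarrow> xs ! (length xs - 2) \<noteq> y"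
  shows "nb_path E (xs @ [y])"
proof -
  have ne: "xs \<noteq> []" using assms(1) by (simp add: nb_path_def)
  have l: "last xs = xs ! (length xs - 1)" using ne by (simp add: last_conv_nth)
  show ?thesis
    unfolding nb_path_def
  proof (intro conjI allI impI)
    show "xs @ [y] \<noteq> []" by simp
  next
    fix i assume i: "Suc i < length (xs @ [y])"
    show "E ((xs @ [y]) ! i) ((xs @ [y]) ! Suc i)"
    proof (cases "Suc i < length xs")
      case True then show ?thesis using assms(1) by (simp add: nb_path_def nth_append)
    next
      case False then have "i = length xs - 1" using i by simp
      then show ?thesis using assms(2) l ne by (simp add: nth_append)
    qed
  next
    fix i assume i: "Suc (Suc i) < length (xs @ [y])"
    show "(xs @ [y]) ! i \<noteq> (xs @ [y]) ! Suc (Suc i)"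
    proof (cases "Suc (Suc i) < length xs")
      case True then show ?thesis using assms(1) by (simp add: nb_path_def nth_append)
    next
      case False then have "i = length xs - 2" using i by simp
      then show ?thesis using assms(3) False i by (simp add: nth_append)
    qed
  qed
qed

locale T =
  fixes V :: "'v set" and E :: "'v \<Rightarrow> 'v \<Rightarrow> bool" and VX VY :: "'v set"
    and X Y :: "'a set" and c :: "'v \<times> 'v \<Rightarrow> 'a"
  assumes tree: "is_tree V E" and cover: "VX \<union> VY = V" and disj: "VX \<inter> VY = {}"
    and bip: "\<And>u w. E u w \<Longrightarrow> (u \<in> VX \<longleftrightarrow> w \<in> VY)"
    and col: "legal_colouring E VX VY X Y c"
    and XY: "X \<inter> Y = {}"
    and X2: "\<exists>a b. a \<in> X \<and> b \<in> X \<and> a \<noteq> b"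
    and Y2: "\<exists>a b. a \<in> Y \<and> b \<in> Y \<and> a \<noteq> b"
begin

lemma sg: "E u w \<Longrightarrow> u \<in> V \<and> w \<in> V \<and> E w u \<and> u \<noteq> w"
  using tree unfolding is_tree_def simple_graph_def by blast

definition S :: "'v \<Rightarrow> 'a set" where "S a = (if a \<in> VX then X else Y)"
definition lab :: "'v \<Rightarrow> 'a" where "lab z = c (SOME u. E u z, z)"

lemma lab_eq: assumes "E u z" shows "c (u, z) = lab z"
proof -
  have z: "z \<in> VX \<union> VY" using sg[OF assms] cover by auto
  have e: "E (SOME u. E u z) z" using assms by (rule someI)
  have "(u,z) \<in> arcs_in E z" "((SOME u. E u z), z) \<in> arcs_in E z"
    using assms e unfolding arcs_in_def by auto
  moreover have K: "\<forall>v\<in>VX \<union> VY. \<forall>a\<in>arcs_in E v. \<forall>b\<in>arcs_in E v. c a = c b"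
    using col unfolding legal_colouring_def by blast
  ultimately show ?thesis unfolding lab_def using z by blast
qed

lemma Sbij: assumes "u \<in> V" shows "bij_betw c (arcs_out E u) (S u)"
proof (cases "u \<in> VX")
  case True then show ?thesis using col unfolding legal_colouring_def S_def by simp
next
  case False then have "u \<in> VY" using assms cover by blast
  then show ?thesis using col False unfolding legal_colouring_def S_def by simp
qed

lemma lab_S: assumes "E u z" shows "lab z \<in> S u"
proof -
  have "(u,z) \<in> arcs_out E u" using assms by (simp add: arcs_out_def)
  moreover have "u \<in> V" using sg[OF assms] by simp
  ultimately have "c (u,z) \<in> S u" using bij_betw_apply Sbij by metis
  then show ?thesis using lab_eq[OF assms] by simp
qed

lemma lab_inj: assumes "E u z" "E u z'" "lab z = lab z'" shows "z = z'"
proof -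
  have "(u,z) \<in> arcs_out E u" "(u,z') \<in> arcs_out E u" using assms by (simp_all add: arcs_out_def)
  moreover have "u \<in> V" using sg[OF assms(1)] by simp
  then have "inj_on c (arcs_out E u)" using Sbij bij_betw_imp_inj_on by metis
  moreover have "c (u,z) = c (u,z')" using assms lab_eq[OF assms(1)] lab_eq[OF assms(2)] by simp
  ultimately have "(u,z) = (u,z')" using inj_on_eq_iff by metis
  then show ?thesis by simp
qed

lemma nbr_ex: assumes "u \<in> V" "x \<in> S u" shows "\<exists>z. E u z \<and> lab z = x"
proof -
  have "x \<in> c ` arcs_out E u" using Sbij[OF assms(1)] assms(2) bij_betw_imp_surj_on by blast
  then obtain z where "E u z" "c (u,z) = x" unfolding arcs_out_def by auto
  then show ?thesis using lab_eq by auto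
qed

definition nbr :: "'v \<Rightarrow> 'a \<Rightarrow> 'v" where "nbr u x = (THE z. E u z \<and> lab z = x)"

lemma nbr: assumes "u \<in> V" "x \<in> S u" shows "E u (nbr u x)" "lab (nbr u x) = x"
proof -
  have "\<exists>!z. E u z \<and> lab z = x" using nbr_ex[OF assms] lab_inj by blast
  then have "E u (nbr u x) \<and> lab (nbr u x) = x" unfolding nbr_def by (rule theI')
  then show "E u (nbr u x)" "lab (nbr u x) = x" by auto
qed

lemma nbr_lab: assumes "E u z" shows "nbr u (lab z) = z"
  unfolding nbr_def
proof (rule the_equality)
  show "E u z \<and> lab z = lab z" using assms by simp
  fix y assume "E u y \<and> lab y = lab z"
  then show "y = z" using lab_inj assms by blast
qed

lemma nbr_V: "u \<in> V \<Longrightarrow> x \<in> S u \<Longrightarrow> nbr u x \<in> V"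
  using sg[OF nbr(1)] by simp

lemma S_XY: "S u = X \<or> S u = Y" by (simp add: S_def)

lemma flip: assumes "E u z" shows "z \<in> VX \<longleftrightarrow> u \<notin> VX"
  using bip[OF assms] sg[OF assms] cover disj by blast

lemma S_ne: "u \<in> V \<Longrightarrow> \<exists>x. x \<in> S u"
  using X2 Y2 unfolding S_def by auto

lemma side_lab: assumes "z \<in> V" shows "(z \<in> VX \<longleftrightarrow> lab z \<in> Y)" "(z \<in> VY \<longleftrightarrow> lab z \<in> X)"
proof -
  obtain x where x: "x \<in> S z" using S_ne assms by blast
  let ?w = "nbr z x"
  have e: "E z ?w" using nbr[OF assms x] by simp
  then have e': "E ?w z" using sg[OF e] by simp
  have l: "lab z \<in> S ?w" using lab_S[OF e'] .
  have "z \<in> VX \<longleftrightarrow> ?w \<notin> VX" using flip[OF e] by blast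
  moreover have "z \<in> VY \<longleftrightarrow> z \<notin> VX" using assms cover disj by blast
  ultimately show "(z \<in> VX \<longleftrightarrow> lab z \<in> Y)" "(z \<in> VY \<longleftrightarrow> lab z \<in> X)"
    using l XY unfolding S_def by (auto split: if_splits)
qed

lemma lab_XY: "z \<in> V \<Longrightarrow> lab z \<in> X \<union> Y"
  using side_lab cover by blast

lemma nb_V: assumes "nb_path E xs" "hd xs \<in> V" shows "set xs \<subseteq> V"
proof
  fix y assume "y \<in> set xs"
  then obtain i where i: "i < length xs" "y = xs ! i" by (auto simp: in_set_conv_nth)
  show "y \<in> V"
  proof (cases i)
    case 0
    have "xs \<noteq> []" using i by auto
    then have "hd xs = xs ! 0" by (simp add: hd_conv_nth)
    then show ?thesis using i 0 assms(2) by simp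
  next
    case (Suc j)
    have e: "E (xs!j) (xs!Suc j)" using i assms(1) Suc unfolding nb_path_def by auto
    show ?thesis using sg[OF e] Suc i by simp
  qed
qed

fun walk :: "'v \<Rightarrow> 'a list \<Rightarrow> 'v list" where
  "walk a [] = []"
| "walk a (x # xs) = nbr a x # walk (nbr a x) xs"

fun chain :: "'v \<Rightarrow> 'v list \<Rightarrow> bool" where
  "chain a [] = True"
| "chain a (y # ys) = (E a y \<and> chain y ys)"

lemma chain_nth: "chain a ys \<longleftrightarrow> (\<forall>i < length ys. E ((a # ys) ! i) (ys ! i))"
proof (induction ys arbitrary: a)
  case Nil then show ?case by simp
next
  case (Cons y ys)
  have "(\<forall>i < length (y # ys). E ((a # y # ys) ! i) ((y # ys) ! i)) \<longleftrightarrow>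
        E a y \<and> (\<forall>i < length ys. E ((y # ys) ! i) (ys ! i))"
    by (simp only: length_Cons All_less_Suc2 nth_Cons_0 nth_Cons_Suc)
  then show ?case using Cons.IH by simp
qed

lemma chain_nb: assumes "nb_path E (B @ a # ys)" shows "chain a ys"
  unfolding chain_nth
proof (intro allI impI)
  fix i assume i: "i < length ys"
  define Q where "Q = B @ a # ys"
  have "\<forall>k. Suc k < length Q \<longrightarrow> E (Q ! k) (Q ! Suc k)" using assms unfolding nb_path_def Q_def by blast
  moreover have "Suc (length B + i) < length Q" using i by (simp add: Q_def)
  ultimately have "E (Q ! (length B + i)) (Q ! Suc (length B + i))" by blast
  moreover have "Q ! (length B + i) = (a # ys) ! i" unfolding Q_def by (simp only: nth_append_length_plus)
  moreover have "Q ! Suc (length B + i) = ys ! i"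
    using nth_append_length_plus[of B "a # ys" "Suc i"] by (simp add: Q_def)
  ultimately show "E ((a # ys) ! i) (ys ! i)" by simp
qed

lemma walk_length: "length (walk a xs) = length xs"
  by (induction xs arbitrary: a) auto

lemma walk_append: "walk a (xs @ ys) = walk a xs @ walk (last (a # walk a xs)) ys"
  by (induction xs arbitrary: a) auto

lemma walk_lab: "chain a ys \<Longrightarrow> walk a (map lab ys) = ys"
proof (induction ys arbitrary: a)
  case Nil then show ?case by simp
next
  case (Cons y ys)
  then have "E a y" "chain y ys" by auto
  then show ?case using Cons.IH nbr_lab[of a y] by simp
qed

lemma walk_map:
  assumes "chain a' ys" "a \<in> V" "a' \<in> V" "a \<in> VX \<longleftrightarrow> a' \<in> VX" "f ` X \<subseteq> X" "f ` Y \<subseteq> Y"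
  shows "chain a (walk a (map (f \<circ> lab) ys)) \<and> length (walk a (map (f \<circ> lab) ys)) = length ys
    \<and> (\<forall>i<length ys. lab (walk a (map (f \<circ> lab) ys) ! i) = f (lab (ys ! i)))
    \<and> set (walk a (map (f \<circ> lab) ys)) \<subseteq> V"
  using assms(1-4)
proof (induction ys arbitrary: a a')
  case Nil then show ?case by simp
next
  case (Cons y ys)
  have e: "E a' y" and ch: "chain y ys" using Cons.prems by auto
  have "S a' = S a" using Cons.prems unfolding S_def by simp
  then have ly: "lab y \<in> S a" using lab_S[OF e] by simp
  have fy: "f (lab y) \<in> S a" using ly assms(5,6) S_XY[of a] by (metis image_subset_iff)
  define z where "z = nbr a (f (lab y))"
  have ez: "E a z" and lz: "lab z = f (lab y)" using nbr[OF Cons.prems(2) fy] z_def by auto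
  have zV: "z \<in> V" "y \<in> V" using sg[OF ez] sg[OF e] by auto
  have side: "z \<in> VX \<longleftrightarrow> y \<in> VX" using flip[OF ez] flip[OF e] Cons.prems(4) by blast
  define W where "W = walk z (map (f \<circ> lab) ys)"
  have IH: "chain z W" "length W = length ys" "\<forall>i<length ys. lab (W ! i) = f (lab (ys ! i))" "set W \<subseteq> V"
    using Cons.IH[OF ch zV side] unfolding W_def comp_def by simp_all
  have w: "walk a (map (f \<circ> lab) (y # ys)) = z # W" by (simp add: z_def W_def)
  have "\<forall>i<length (y#ys). lab ((z # W) ! i) = f (lab ((y # ys) ! i))"
  proof (intro allI impI)
    fix i assume "i < length (y # ys)"
    then show "lab ((z # W) ! i) = f (lab ((y # ys) ! i))"
      using IH(3) lz by (cases i) auto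
  qed
  then show ?case unfolding w using IH ez zV by simp
qed

lemma common_nbr: assumes "E a w" "E w b" "E a w'" "E w' b" "a \<noteq> b" shows "w = w'"
proof -
  have nb: "nb_path E [a,w,b]" "nb_path E [a,w',b]"
    using assms unfolding nb_path_def by (auto simp: nth_Cons split: nat.split)
  have "a \<in> V" "b \<in> V" using sg[OF assms(1)] sg[OF assms(2)] by auto
  then have ex1: "\<exists>!xs. nb_path E xs \<and> hd xs = a \<and> last xs = b"
    using tree unfolding is_tree_def by blast
  have u: "\<And>xs ys. nb_path E xs \<Longrightarrow> hd xs = a \<Longrightarrow> last xs = b \<Longrightarrow> nb_path E ys \<Longrightarrow> hd ys = a \<Longrightarrow> last ys = b \<Longrightarrow> xs = ys"
    using ex1 by blast
  have "[a,w,b] = [a,w',b]" by (rule u[OF nb(1) _ _ nb(2)]) simp_all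
  then show ?thesis by simp
qed

end

lemma two_last: assumes "2 \<le> length xs" shows "\<exists>ys a b. xs = ys @ [a, b]"
proof -
  have ne: "xs \<noteq> []" using assms by auto
  have bne: "butlast xs \<noteq> []" using assms by (cases xs) auto
  have "xs = butlast xs @ [last xs]" using ne by simp
  also have "butlast xs = butlast (butlast xs) @ [last (butlast xs)]" using bne by simp
  finally show ?thesis by (metis append.assoc append_Cons append_Nil)
qed

locale TR = T +
  fixes r
  assumes r: "r \<in> V"
begin

definition P where "P u = (THE xs. nb_path E xs \<and> hd xs = r \<and> last xs = u)"

lemma ex1P: "u \<in> V \<Longrightarrow> \<exists>!xs. nb_path E xs \<and> hd xs = r \<and> last xs = u"
  using tree r unfolding is_tree_def by blast

lemma P: assumes "u \<in> V" shows "nb_path E (P u)" "hd (P u) = r" "last (P u) = u"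
proof -
  have "nb_path E (P u) \<and> hd (P u) = r \<and> last (P u) = u" unfolding P_def by (rule theI'[OF ex1P[OF assms]])
  then show "nb_path E (P u)" "hd (P u) = r" "last (P u) = u" by auto
qed

lemma P_uniq: assumes "nb_path E xs" "hd xs = r" "last xs \<in> V" shows "P (last xs) = xs"
proof -
  have u: "\<And>xs ys. nb_path E xs \<Longrightarrow> hd xs = r \<Longrightarrow> last xs = last xs0 \<Longrightarrow> nb_path E ys \<Longrightarrow> hd ys = r \<Longrightarrow> last ys = last xs0 \<Longrightarrow> xs = ys"
    if "last xs0 \<in> V" for xs0
    using ex1P[OF that] by blast
  show ?thesis using u[OF assms(3), OF P(1)[OF assms(3)] P(2)[OF assms(3)] P(3)[OF assms(3)] assms(1,2)] by simp
qed

lemma P_ne: "u \<in> V \<Longrightarrow> P u \<noteq> []"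
  using P(1) nb_ne by blast

lemma P_V: "u \<in> V \<Longrightarrow> set (P u) \<subseteq> V"
  using nb_V P r by metis

lemma P_r: "P r = [r]"
proof -
  have "nb_path E [r]" unfolding nb_path_def by simp
  then show ?thesis using P_uniq[of "[r]"] r by simp
qed

lemma P_prefix: assumes "u \<in> V" "P u = xs @ ys" "xs \<noteq> []" shows "P (last xs) = xs"
proof -
  have nb: "nb_path E xs" using nb_prefix P(1)[OF assms(1)] assms(2,3) by metis
  have "hd xs = r" using P(2)[OF assms(1)] assms(2,3) by simp
  moreover have "last xs \<in> V" using P_V[OF assms(1)] assms(2,3) by auto
  ultimately show ?thesis using P_uniq nb by blast
qed

lemma P_snoc_E: assumes "a \<in> V" "b \<in> V" "P b = P a @ [b]" shows "E a b"
proof -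
  define k where "k = length (P a)"
  have k: "k \<ge> 1" using P_ne[OF assms(1)] unfolding k_def by (cases "P a") auto
  have "\<forall>i. Suc i < length (P b) \<longrightarrow> E (P b ! i) (P b ! Suc i)" using P(1)[OF assms(2)] unfolding nb_path_def by blast
  moreover have "Suc (k - 1) < length (P b)" using assms(3) k unfolding k_def by simp
  ultimately have "E (P b ! (k - 1)) (P b ! Suc (k - 1))" by blast
  moreover have "P b ! (k - 1) = a"
    using assms(3) k P(3)[OF assms(1)] P_ne[OF assms(1)] unfolding k_def by (simp add: nth_append last_conv_nth)
  moreover have "P b ! Suc (k - 1) = b"
  proof -
    have "Suc (k - 1) = k" using k by simp
    moreover have "P b ! k = b" unfolding k_def using assms(3) by simp
    ultimately show ?thesis by simp
  qed
  ultimately show ?thesis by simp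
qed

lemma pc: assumes "E a b" shows "P b = P a @ [b] \<or> P a = P b @ [a]"
proof -
  have aV: "a \<in> V" and bV: "b \<in> V" using sg[OF assms] by auto
  define xs where "xs = P a"
  define n where "n = length xs"
  show ?thesis
  proof (cases "2 \<le> n \<and> xs ! (n - 2) = b")
    case True
    have ne: "xs \<noteq> []" using True unfolding n_def by auto
    have bne: "butlast xs \<noteq> []" using True unfolding n_def by (cases xs) auto
    have la: "last xs = a" using P(3)[OF aV] xs_def by simp
    have xs_eq: "xs = butlast xs @ [a]" using ne la by (metis append_butlast_last_id)
    have "last (butlast xs) = butlast xs ! (length (butlast xs) - 1)" using bne by (simp add: last_conv_nth)
    also have "\<dots> = xs ! (n - 2)" using True bne unfolding n_def by (subst nth_butlast) (auto simp: numeral_2_eq_2)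
    finally have lb: "last (butlast xs) = b" using True by simp
    have "P (last (butlast xs)) = butlast xs" using P_prefix[OF aV _ bne] xs_eq xs_def by metis
    then have "P b = butlast xs" using lb by simp
    then show ?thesis using xs_eq xs_def by simp
  next
    case False
    have nb: "nb_path E (xs @ [b])"
    proof (rule nb_snoc)
      show "nb_path E xs" using P(1)[OF aV] xs_def by simp
      show "E (last xs) b" using P(3)[OF aV] xs_def assms by simp
      show "2 \<le> length xs \<Longrightarrow> xs ! (length xs - 2) \<noteq> b" using False n_def by simp
    qed
    have "hd (xs @ [b]) = r" using P(2)[OF aV] P_ne[OF aV] xs_def by simp
    then have "P (last (xs @ [b])) = xs @ [b]" using P_uniq[OF nb] bV by simp
    then show ?thesis using xs_def by simp
  qed
qed

lemma ext_lab: assumes "u \<in> V" "x \<in> S u" "2 \<le> length (P u) \<Longrightarrow> lab (P u ! (length (P u) - 2)) \<noteq> x"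
  shows "P (nbr u x) = P u @ [nbr u x]"
proof -
  define z where "z = nbr u x"
  have ez: "E u z" and lz: "lab z = x" using nbr[OF assms(1,2)] z_def by auto
  have nb: "nb_path E (P u @ [z])"
  proof (rule nb_snoc)
    show "nb_path E (P u)" using P(1)[OF assms(1)] .
    show "E (last (P u)) z" using P(3)[OF assms(1)] ez by simp
    show "2 \<le> length (P u) \<Longrightarrow> P u ! (length (P u) - 2) \<noteq> z" using assms(3) lz by blast
  qed
  have "hd (P u @ [z]) = r" using P(2)[OF assms(1)] P_ne[OF assms(1)] by simp
  moreover have "z \<in> V" using sg[OF ez] by simp
  ultimately have "P (last (P u @ [z])) = P u @ [z]" using P_uniq[OF nb] by simp
  then show ?thesis using z_def by simp
qed

lemma two_S: "\<exists>x1 x2. x1 \<in> S u \<and> x2 \<in> S u \<and> x1 \<noteq> x2"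
  using X2 Y2 unfolding S_def by auto

lemma ext: assumes "u \<in> V" shows "\<exists>z. E u z \<and> P z = P u @ [z]"
proof -
  obtain x1 x2 where x: "x1 \<in> S u" "x2 \<in> S u" "x1 \<noteq> x2" using two_S by blast
  define x where "x = (if 2 \<le> length (P u) \<and> lab (P u ! (length (P u) - 2)) = x1 then x2 else x1)"
  have xS: "x \<in> S u" using x x_def by simp
  have "P (nbr u x) = P u @ [nbr u x]"
    by (rule ext_lab[OF assms xS]) (use x in \<open>auto simp: x_def\<close>)
  moreover have "E u (nbr u x)" using nbr[OF assms xS] by simp
  ultimately show ?thesis by blast
qed

lemma deep: "\<exists>u\<in>V. n \<le> length (P u)"
proof (induction n)
  case 0 then show ?case using r by blast
next
  case (Suc n)
  then obtain u where u: "u \<in> V" "n \<le> length (P u)" by blast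
  obtain z where z: "E u z" "P z = P u @ [z]" using ext[OF u(1)] by blast
  have "z \<in> V" using sg[OF z(1)] by simp
  then show ?case using z u by (intro bexI[of _ z]) auto
qed

lemma choose:
  assumes "w0 \<in> V" "x0 \<in> S w0"
  shows "\<exists>ys0 p v. v \<in> V \<and> P v = ys0 @ [p, v] \<and> lab p = x0 \<and> n \<le> length (P v) \<and> (v \<in> VX \<longleftrightarrow> w0 \<in> VX)"
proof -
  obtain u where u: "u \<in> V" "n + 2 \<le> length (P u)" using deep by blast
  obtain q where q: "q \<in> V" "n + 2 \<le> length (P q)" "q \<in> VX \<longleftrightarrow> w0 \<in> VX"
  proof (cases "u \<in> VX \<longleftrightarrow> w0 \<in> VX")
    case True then show ?thesis using that u by blast
  next
    case False
    obtain z where z: "E u z" "P z = P u @ [z]" using ext[OF u(1)] by blast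
    have "z \<in> V" using sg[OF z(1)] by simp
    moreover have "n + 2 \<le> length (P z)" using z u by simp
    moreover have "z \<in> VX \<longleftrightarrow> w0 \<in> VX" using flip[OF z(1)] False by blast
    ultimately show ?thesis using that by blast
  qed
  have Sq: "x0 \<in> S q" using assms q(3) unfolding S_def by simp
  obtain zs q' b where dec: "P q = zs @ [q', b]" using two_last[of "P q"] q(2) by auto
  have "b = q" using P(3)[OF q(1)] dec by simp
  then have dec: "P q = zs @ [q', q]" using dec by simp
  show ?thesis
  proof (cases "lab q' = x0")
    case True then show ?thesis using q dec by (intro exI[of _ zs] exI[of _ q'] exI[of _ q]) auto
  next
    case False
    define p where "p = nbr q x0"
    have Pp: "P p = P q @ [p]"
      unfolding p_def by (rule ext_lab[OF q(1) Sq]) (use dec False in \<open>simp add: nth_append\<close>)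
    have ep: "E q p" and lp: "lab p = x0" using nbr[OF q(1) Sq] p_def by auto
    have pV: "p \<in> V" using sg[OF ep] by simp
    obtain v where v: "E p v" "P v = P p @ [v]" using ext[OF pV] by blast
    have vV: "v \<in> V" using sg[OF v(1)] by simp
    have "P v = (zs @ [q', q]) @ [p, v]" using v(2) Pp dec by simp
    moreover have "n \<le> length (P v)" using v(2) Pp q(2) by simp
    moreover have "v \<in> VX \<longleftrightarrow> w0 \<in> VX" using flip[OF v(1)] flip[OF ep] q(3) by blast
    ultimately show ?thesis using vV lp by blast
  qed
qed

definition below where
  "below v u \<longleftrightarrow> u \<in> V \<and> (\<exists>ys. ys \<noteq> [] \<and> P u = P v @ ys)"
definition D where "D v u = drop (length (P v)) (P u)"
definition gm where
  "gm v f u = (if below v u then last (walk v (map (f \<circ> lab) (D v u))) else u)"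

lemma below_D: assumes "below v u" shows "P u = P v @ D v u" "D v u \<noteq> []"
  using assms unfolding below_def D_def by auto

lemma below_len: "below v u \<Longrightarrow> length (P v) < length (P u)"
  unfolding below_def by auto

lemma E1: assumes "a \<in> V" "b \<in> V" "v \<in> V" "P b = P a @ [b]"
  shows "below v b \<longleftrightarrow> below v a \<or> a = v"
proof
  assume "below v b"
  then obtain zs where zs: "zs \<noteq> []" "P b = P v @ zs" unfolding below_def by blast
  have "P a @ [b] = (P v @ butlast zs) @ [last zs]" using zs assms(4) by simp
  then have Pa: "P a = P v @ butlast zs" by simp
  show "below v a \<or> a = v"
  proof (cases "butlast zs = []")
    case True
    then have "P a = P v" using Pa by simp
    then have "a = v" using P(3)[OF assms(1)] P(3)[OF assms(3)] by metis
    then show ?thesis by simp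
  next
    case False then show ?thesis using Pa assms(1) unfolding below_def by blast
  qed
next
  assume "below v a \<or> a = v"
  then show "below v b"
  proof
    assume "below v a"
    then obtain ys where "ys \<noteq> []" "P a = P v @ ys" unfolding below_def by blast
    then show ?thesis using assms(2,4) unfolding below_def by (intro conjI exI[of _ "ys @ [b]"]) auto
  next
    assume "a = v"
    then show ?thesis using assms(2,4) unfolding below_def by auto
  qed
qed

lemma E1D: assumes "a \<in> V" "b \<in> V" "v \<in> V" "P b = P a @ [b]" "below v b"
  shows "D v b = (if a = v then [b] else D v a @ [b])"
proof (cases "a = v")
  case True then show ?thesis using assms unfolding D_def by simp
next
  case False
  then have "below v a" using E1[OF assms(1-4)] assms(5) by simp
  then have "P a = P v @ D v a" by (rule below_D)
  then have eq: "P b = P v @ (D v a @ [b])" using assms(4) by simp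
  have "D v b = drop (length (P v)) (P b)" by (simp add: D_def)
  also have "\<dots> = D v a @ [b]" using eq by simp
  finally show ?thesis using False by simp
qed

end

locale G = TR +
  fixes v ys0 p f f'
  assumes v: "v \<in> V" and Pv: "P v = ys0 @ [p, v]"
    and fX: "f ` X \<subseteq> X" and fY: "f ` Y \<subseteq> Y" and f'X: "f' ` X \<subseteq> X" and f'Y: "f' ` Y \<subseteq> Y"
    and ff': "\<And>x. x \<in> X \<union> Y \<Longrightarrow> f' (f x) = x" and f'f: "\<And>x. x \<in> X \<union> Y \<Longrightarrow> f (f' x) = x"
    and fp: "f (lab p) = lab p" and fv: "f (lab v) = lab v"
begin

abbreviation g where "g \<equiv> gm v f"

lemma pV: "p \<in> V" using P_V[OF v] Pv by auto

lemma Pp: "P p = ys0 @ [p]"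
  using P_prefix[OF v, of "ys0 @ [p]" "[v]"] Pv by simp

lemma epv: "E p v" using P_snoc_E[OF pV v] Pv Pp by simp

lemma swap: "G V E VX VY X Y c r v ys0 p f' f"
proof -
  have "lab p \<in> X \<union> Y" "lab v \<in> X \<union> Y" using lab_XY pV v by auto
  then have "f' (lab p) = lab p" "f' (lab v) = lab v" using ff' fp fv by metis+
  then show ?thesis
    by unfold_locales (use tree cover disj bip col XY X2 Y2 r v Pv fX fY f'X f'Y ff' f'f in auto)
qed

lemma nb_v: "\<not> below v v" unfolding below_def by auto
lemma nb_p: "\<not> below v p" using below_len[of v p] Pv Pp by auto

lemma g_nb: "\<not> below v u \<Longrightarrow> g u = u" unfolding gm_def by simp

lemma f_XY: "x \<in> X \<union> Y \<Longrightarrow> f x \<in> X \<union> Y" using fX fY by auto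
lemma f_inj: "x \<in> X \<union> Y \<Longrightarrow> y \<in> X \<union> Y \<Longrightarrow> f x = f y \<Longrightarrow> x = y" using ff' by metis
lemma f_Y: "x \<in> X \<union> Y \<Longrightarrow> f x \<in> Y \<longleftrightarrow> x \<in> Y" using fX fY XY by auto
lemma f_S: "x \<in> S u \<Longrightarrow> f x \<in> S u" using fX fY unfolding S_def by (auto split: if_splits)

lemma Dchain: assumes "below v u" shows "chain v (D v u)" "set (D v u) \<subseteq> V"
proof -
  have uV: "u \<in> V" using assms unfolding below_def by simp
  have "P u = (ys0 @ [p]) @ v # D v u" using below_D[OF assms] Pv by simp
  then show "chain v (D v u)" using chain_nb P(1)[OF uV] by metis
  show "set (D v u) \<subseteq> V" using below_D[OF assms] P_V[OF uV] by auto
qed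

lemma gm_below:
  assumes "below v u"
  shows "below v (g u) \<and> D v (g u) = walk v (map (f \<circ> lab) (D v u)) \<and> lab (g u) = f (lab u) \<and> g u \<in> V"
proof -
  have uV: "u \<in> V" using assms unfolding below_def by simp
  define ys where "ys = D v u"
  have yne: "ys \<noteq> []" using below_D[OF assms] ys_def by simp
  define B where "B = ys0 @ [p]"
  define k where "k = length B"
  have k1: "1 \<le> k" unfolding k_def B_def by simp
  define Q where "Q = B @ v # ys"
  have PuQ: "P u = Q" using below_D[OF assms] Pv unfolding Q_def B_def ys_def by simp
  have nbQ: "nb_path E Q" using P(1)[OF uV] PuQ by simp
  have QV: "set Q \<subseteq> V" using P_V[OF uV] PuQ by simp
  have ch: "chain v ys" using Dchain[OF assms] ys_def by simp
  define W where "W = walk v (map (f \<circ> lab) ys)"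
  have wm: "chain v W" "length W = length ys" "\<forall>i<length ys. lab (W ! i) = f (lab (ys ! i))" "set W \<subseteq> V"
    using walk_map[OF ch v v _ fX fY] unfolding W_def by auto
  define Q' where "Q' = B @ v # W"
  have lenQ: "length Q' = length Q" unfolding Q_def Q'_def using wm(2) by simp
  have A: "Q' ! j = Q ! j" if "j \<le> k" for j
  proof (cases "j < k")
    case True then show ?thesis unfolding Q_def Q'_def k_def by (simp add: nth_append)
  next
    case False then have "j = k" using that by simp
    then show ?thesis unfolding Q_def Q'_def k_def by simp
  qed
  have Bl: "B ! (k - 1) = p" unfolding B_def k_def by simp
  have Lb: "lab (Q' ! j) = f (lab (Q ! j))" if h: "k - 1 \<le> j" "j < length Q" for j
  proof -
    consider "j = k - 1" | "j = k" | "k < j" using h k1 by linarith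
    then show ?thesis
    proof cases
      case 1
      have lt: "length B - 1 < length B" using k1 unfolding k_def by simp
      have "Q ! j = p" "Q' ! j = p" using 1 Bl k1 lt unfolding Q_def Q'_def k_def by (simp_all add: nth_append)
      then show ?thesis using fp by simp
    next
      case 2
      then have "Q ! j = v" "Q' ! j = v" unfolding Q_def Q'_def k_def by simp_all
      then show ?thesis using fv by simp
    next
      case 3
      then have "Q ! j = ys ! (j - k - 1)" "Q' ! j = W ! (j - k - 1)"
        unfolding Q_def Q'_def k_def by (simp_all add: nth_append nth_Cons')
      moreover have "j - k - 1 < length ys" using h 3 unfolding Q_def k_def by simp
      ultimately show ?thesis using wm(3) by simp
    qed
  qed
  have Dadj: "E (Q' ! j) (Q' ! Suc j)" if "k \<le> j" "Suc j < length Q'" for j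
  proof -
    have "Q' ! j = (v # W) ! (j - k)" "Q' ! Suc j = W ! (j - k)"
      using that unfolding Q'_def k_def by (simp_all add: nth_append Suc_diff_le)
    moreover have "j - k < length W" using that unfolding Q'_def k_def by simp
    ultimately show ?thesis using wm(1) unfolding chain_nth by simp
  qed
  have nbQ': "nb_path E Q'"
    unfolding nb_path_def
  proof (intro conjI allI impI)
    show "Q' \<noteq> []" unfolding Q'_def by simp
  next
    fix i assume i: "Suc i < length Q'"
    show "E (Q' ! i) (Q' ! Suc i)"
    proof (cases "Suc i \<le> k")
      case True
      then have "Q' ! i = Q ! i" "Q' ! Suc i = Q ! Suc i" using A by auto
      moreover have "E (Q ! i) (Q ! Suc i)" using nbQ i lenQ unfolding nb_path_def by auto
      ultimately show ?thesis by simp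
    next
      case False then show ?thesis using Dadj i by simp
    qed
  next
    fix i assume i: "Suc (Suc i) < length Q'"
    show "Q' ! i \<noteq> Q' ! Suc (Suc i)"
    proof (cases "Suc (Suc i) \<le> k")
      case True
      then have "Q' ! i = Q ! i" "Q' ! Suc (Suc i) = Q ! Suc (Suc i)" using A by auto
      moreover have "Q ! i \<noteq> Q ! Suc (Suc i)" using nbQ i lenQ unfolding nb_path_def by auto
      ultimately show ?thesis by simp
    next
      case False
      have e1: "E (Q ! i) (Q ! Suc i)" using nbQ i lenQ unfolding nb_path_def by auto
      have e2: "E (Q ! Suc i) (Q ! Suc (Suc i))" using nbQ i lenQ unfolding nb_path_def by auto
      have ne: "Q ! i \<noteq> Q ! Suc (Suc i)" using nbQ i lenQ unfolding nb_path_def by auto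
      have e1': "E (Q ! Suc i) (Q ! i)" using sg[OF e1] by simp
      have ldiff: "lab (Q ! i) \<noteq> lab (Q ! Suc (Suc i))" using lab_inj[OF e1' e2] ne by blast
      have inV: "Q ! i \<in> V" "Q ! Suc (Suc i) \<in> V" using QV i lenQ by (auto intro: nth_mem)
      have "f (lab (Q ! i)) \<noteq> f (lab (Q ! Suc (Suc i)))"
        using f_inj[OF lab_XY[OF inV(1)] lab_XY[OF inV(2)]] ldiff by blast
      moreover have "lab (Q' ! i) = f (lab (Q ! i))" using Lb False i lenQ by simp
      moreover have "lab (Q' ! Suc (Suc i)) = f (lab (Q ! Suc (Suc i)))" using Lb False i lenQ by simp
      ultimately show ?thesis by metis
    qed
  qed
  have Wne: "W \<noteq> []" using wm(2) yne by auto
  have hdQ': "hd Q' = r" using P(2)[OF v] Pv unfolding Q'_def B_def by (cases ys0) simp_all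
  have lastW: "last Q' = last W" using Wne unfolding Q'_def by simp
  have lWV: "last W \<in> V" using wm(4) Wne by auto
  have PW: "P (last W) = P v @ W" using P_uniq[OF nbQ' hdQ'] lastW lWV Pv unfolding Q'_def B_def by simp
  have gu: "g u = last W" using assms unfolding gm_def W_def ys_def by simp
  have lu: "last ys = u" using P(3)[OF uV] PuQ yne unfolding Q_def by simp
  have "lab (last W) = lab (W ! (length W - 1))" using Wne by (simp add: last_conv_nth)
  also have "\<dots> = f (lab (ys ! (length ys - 1)))"
  proof -
    have "length ys - 1 < length ys" using yne by simp
    then show ?thesis using wm(2,3) by simp
  qed
  also have "\<dots> = f (lab u)" using lu yne by (simp add: last_conv_nth)
  finally have "lab (g u) = f (lab u)" using gu by simp
  moreover have "below v (g u)" using gu PW Wne lWV unfolding below_def by auto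
  moreover have "D v (g u) = W" using gu PW unfolding D_def by simp
  ultimately show ?thesis using gu lWV unfolding W_def ys_def by simp
qed

lemma g_V: "u \<in> V \<Longrightarrow> g u \<in> V"
  using gm_below g_nb by (cases "below v u") auto

lemma g_side: assumes "u \<in> V" shows "g u \<in> VX \<longleftrightarrow> u \<in> VX"
proof (cases "below v u")
  case True
  then have "lab (g u) = f (lab u)" "g u \<in> V" using gm_below by auto
  then show ?thesis using side_lab(1)[of "g u"] side_lab(1)[OF assms] f_Y[OF lab_XY[OF assms]] by simp
next
  case False then show ?thesis using g_nb by simp
qed

lemma g_S: "u \<in> V \<Longrightarrow> S (g u) = S u" using g_side unfolding S_def by simp

lemma edge_pc: assumes "a \<in> V" "b \<in> V" "P b = P a @ [b]" shows "E (g a) (g b)"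
proof -
  have eab: "E a b" using P_snoc_E[OF assms] .
  have flS: "f (lab b) \<in> S a" using f_S[OF lab_S[OF eab]] .
  consider "below v a" | "a = v" | "\<not> below v a" "a \<noteq> v" by blast
  then show ?thesis
  proof cases
    case 1
    have av: "a \<noteq> v" using 1 nb_v by auto
    have bb: "below v b" using E1[OF assms(1,2) v assms(3)] 1 by simp
    have Db: "D v b = D v a @ [b]" using E1D[OF assms(1,2) v assms(3) bb] av by simp
    define Wa where "Wa = walk v (map (f \<circ> lab) (D v a))"
    have Wne: "Wa \<noteq> []" using below_D(2)[OF 1] walk_length unfolding Wa_def by (metis length_0_conv length_map)
    have ga: "g a = last Wa" using 1 unfolding gm_def Wa_def by simp
    have "g b = last (walk v (map (f \<circ> lab) (D v a @ [b])))" using bb unfolding gm_def Db by simp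
    also have "\<dots> = nbr (g a) (f (lab b))"
      using Wne ga unfolding Wa_def by (simp add: walk_append)
    finally have gb: "g b = nbr (g a) (f (lab b))" .
    have "f (lab b) \<in> S (g a)" using flS g_S[OF assms(1)] by simp
    then show ?thesis using nbr(1)[OF g_V[OF assms(1)]] gb by simp
  next
    case 2
    have bb: "below v b" using E1[OF assms(1,2) v assms(3)] 2 by simp
    have Db: "D v b = [b]" using E1D[OF assms(1,2) v assms(3) bb] 2 by simp
    have "g b = nbr v (f (lab b))" using bb unfolding gm_def Db by simp
    moreover have "g a = v" using 2 nb_v g_nb by simp
    ultimately show ?thesis using nbr(1)[OF v] flS 2 by simp
  next
    case 3
    have "\<not> below v b" using E1[OF assms(1,2) v assms(3)] 3 by simp
    then show ?thesis using 3 g_nb eab by simp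
  qed
qed

lemma g_edge: assumes "E a b" shows "E (g a) (g b)"
proof -
  have V: "a \<in> V" "b \<in> V" using sg[OF assms] by auto
  from pc[OF assms] show ?thesis
  proof
    assume "P b = P a @ [b]" then show ?thesis using edge_pc V by simp
  next
    assume "P a = P b @ [a]" then have "E (g b) (g a)" using edge_pc V by simp
    then show ?thesis using sg by blast
  qed
qed

lemma g_inv: assumes "u \<in> V" shows "gm v f' (g u) = u"
proof (cases "below v u")
  case True
  define ys where "ys = D v u"
  have ch: "chain v ys" "set ys \<subseteq> V" using Dchain[OF True] ys_def by auto
  define W where "W = walk v (map (f \<circ> lab) ys)"
  have wm: "length W = length ys" "\<forall>i<length ys. lab (W ! i) = f (lab (ys ! i))"
    using walk_map[OF ch(1) v v _ fX fY] unfolding W_def by auto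
  have gb: "below v (g u)" "D v (g u) = W" using gm_below[OF True] unfolding W_def ys_def by auto
  have "map (f' \<circ> lab) W = map lab ys"
  proof (rule nth_equalityI)
    show "length (map (f' \<circ> lab) W) = length (map lab ys)" using wm by simp
    fix i assume "i < length (map (f' \<circ> lab) W)"
    then have i: "i < length ys" using wm by simp
    have "ys ! i \<in> V" using ch(2) i by (auto intro: nth_mem)
    then show "map (f' \<circ> lab) W ! i = map lab ys ! i" using wm i ff' lab_XY by simp
  qed
  then have "gm v f' (g u) = last (walk v (map lab ys))" using gb unfolding gm_def by simp
  also have "\<dots> = last ys" using walk_lab[OF ch(1)] by simp
  also have "\<dots> = u" using below_D[OF True] P(3)[OF assms] unfolding ys_def by (metis last_appendR)
  finally show ?thesis .
next
  case False then show ?thesis using g_nb unfolding gm_def by simp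
qed

lemma lab_g_near: assumes "u \<in> V" "below v u \<or> u = v \<or> u = p" shows "lab (g u) = f (lab u)"
  using assms gm_below g_nb nb_v nb_p fv fp by auto

lemma local: assumes "w \<in> V"
  shows "local_action E c g w (S w) = (\<lambda>x\<in>S w. if below v w \<or> w = v then f x else x)"
  unfolding local_action_def
proof (rule restrict_ext)
  fix x assume x: "x \<in> S w"
  define z where "z = nbr w x"
  have ez: "E w z" and lz: "lab z = x" using nbr[OF assms x] z_def by auto
  have zV: "z \<in> V" using sg[OF ez] by simp
  have inj: "inj_on c (arcs_out E w)" using Sbij[OF assms] bij_betw_imp_inj_on by metis
  have "(w, z) \<in> arcs_out E w" using ez by (simp add: arcs_out_def)
  moreover have "c (w, z) = x" using lab_eq[OF ez] lz by simp
  ultimately have ti: "the_inv_into (arcs_out E w) c x = (w, z)" using the_inv_into_f_eq[OF inj] by metis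
  have "c (g w, g (snd (the_inv_into (arcs_out E w) c x))) = lab (g z)"
    using ti lab_eq[OF g_edge[OF ez]] by simp
  also have "\<dots> = (if below v w \<or> w = v then f x else x)"
  proof (cases "below v w \<or> w = v")
    case True
    have "below v z \<or> z = v \<or> z = p"
      using pc[OF ez]
    proof
      assume "P z = P w @ [z]" then show ?thesis using E1[OF assms zV v] True by simp
    next
      assume h: "P w = P z @ [w]"
      show ?thesis
      proof (cases "w = v")
        case True
        then have "P z = ys0 @ [p]" using h Pv by simp
        then have "z = p" using P(3)[OF zV] by simp
        then show ?thesis by simp
      next
        case False then show ?thesis using E1[OF zV assms v h] \<open>below v w \<or> w = v\<close> by blast
      qed
    qed
    then show ?thesis using lab_g_near[OF zV] lz True by simp
  next
    case False
    have "\<not> below v z"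
      using pc[OF ez]
    proof
      assume "P z = P w @ [z]" then show ?thesis using E1[OF assms zV v] False by simp
    next
      assume h: "P w = P z @ [w]" then show ?thesis using E1[OF zV assms v h] False by simp
    qed
    then show ?thesis using g_nb lz False by simp
  qed
  finally show "c (g w, g (snd (the_inv_into (arcs_out E w) c x))) = (if below v w \<or> w = v then f x else x)" .
qed

lemma aut: "g \<in> tree_aut V E"
proof -
  have G': "G V E VX VY X Y c r v ys0 p f' f" by (rule swap)
  have b: "bij_betw g V V"
  proof (rule bij_betw_byWitness[where f' = "gm v f'"])
    show "\<forall>a\<in>V. gm v f' (g a) = a" using g_inv by simp
    show "\<forall>a\<in>V. g (gm v f' a) = a" using G.g_inv[OF G'] by simp
    show "g ` V \<subseteq> V" using g_V by auto
    show "gm v f' ` V \<subseteq> V" using G.g_V[OF G'] by auto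
  qed
  have "E a b \<longleftrightarrow> E (g a) (g b)" if "a \<in> V" "b \<in> V" for a b
  proof
    assume "E a b" then show "E (g a) (g b)" by (rule g_edge)
  next
    assume "E (g a) (g b)"
    then have "E (gm v f' (g a)) (gm v f' (g b))" by (rule G.g_edge[OF G'])
    then show "E a b" using g_inv that by simp
  qed
  then show ?thesis using b unfolding tree_aut_def by blast
qed

lemma gVX: "g ` VX = VX"
proof -
  have G': "G V E VX VY X Y c r v ys0 p f' f" by (rule swap)
  have "g ` VX \<subseteq> VX" using g_side cover by auto
  moreover have "VX \<subseteq> g ` VX"
  proof
    fix x assume x: "x \<in> VX"
    then have xV: "x \<in> V" using cover by auto
    have "gm v f' x \<in> VX" using G.g_side[OF G' xV] x by simp
    moreover have "g (gm v f' x) = x" using G.g_inv[OF G' xV] by simp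
    ultimately show "x \<in> g ` VX" by (metis image_eqI)
  qed
  ultimately show ?thesis by blast
qed

lemma fix_first: assumes "below v u" "g u = u" shows "f (lab (D v u ! 0)) = lab (D v u ! 0)"
proof -
  define ys where "ys = D v u"
  have ch: "chain v ys" using Dchain[OF assms(1)] ys_def by auto
  have yne: "ys \<noteq> []" using below_D[OF assms(1)] ys_def by simp
  define W where "W = walk v (map (f \<circ> lab) ys)"
  have wm: "\<forall>i<length ys. lab (W ! i) = f (lab (ys ! i))"
    using walk_map[OF ch v v _ fX fY] unfolding W_def by auto
  have "D v (g u) = W" using gm_below[OF assms(1)] unfolding W_def ys_def by auto
  then have "W = ys" using assms(2) ys_def by simp
  then show ?thesis using wm yne ys_def by auto
qed

end

context TR
begin

lemma build:
  assumes w0: "w0 \<in> V" and mB: "m \<in> Bij (S w0)" and x0: "x0 \<in> S w0" "m x0 = x0"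
    and x1: "x1 \<in> S w0" "m x1 \<noteq> x1" and F: "finite F" "F \<subseteq> V"
  shows "\<exists>g. g \<in> tree_aut V E \<and> g ` VX = VX \<and>
     (\<forall>w\<in>V. local_action E c g w (S w) = (\<lambda>x\<in>S w. x) \<or> (S w = S w0 \<and> local_action E c g w (S w) = m)) \<and>
     (\<forall>y\<in>F. g y = y) \<and> (\<exists>y\<in>VY. g y \<noteq> y)"
proof -
  let ?A = "S w0"
  have bm: "bij_betw m ?A ?A" and extm: "m \<in> extensional ?A" using mB unfolding Bij_def by auto
  define f where "f = (\<lambda>x. if x \<in> ?A then m x else x)"
  define f' where "f' = (\<lambda>x. if x \<in> ?A then inv_into ?A m x else x)"
  define n where "n = Suc (Max (length ` P ` F))"
  obtain ys0 p v where v: "v \<in> V" "P v = ys0 @ [p, v]" "lab p = x0" "n \<le> length (P v)" "v \<in> VX \<longleftrightarrow> w0 \<in> VX"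
    using choose[OF w0 x0(1), of n] by blast
  have AXY: "?A = X \<or> ?A = Y" by (rule S_XY)
  have mA: "x \<in> ?A \<Longrightarrow> m x \<in> ?A" for x using bm bij_betw_apply by metis
  have iA: "x \<in> ?A \<Longrightarrow> inv_into ?A m x \<in> ?A" for x using bm
    by (metis bij_betw_def inv_into_into)
  have fA: "f ` X \<subseteq> X" "f ` Y \<subseteq> Y" "f' ` X \<subseteq> X" "f' ` Y \<subseteq> Y"
    using AXY mA iA XY unfolding f_def f'_def by auto
  have ff': "f' (f x) = x" "f (f' x) = x" if "x \<in> X \<union> Y" for x
  proof -
    show "f' (f x) = x"
      using mA bm unfolding f_def f'_def by (auto simp: bij_betw_def inv_into_f_f)
    show "f (f' x) = x"
      using iA bm unfolding f_def f'_def by (auto simp: bij_betw_def f_inv_into_f)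
  qed
  have sv: "S v = ?A" using v(5) unfolding S_def by simp
  have labv: "lab v \<notin> ?A"
  proof (cases "v \<in> VX")
    case True then have "lab v \<in> Y" using side_lab(1)[OF v(1)] by simp
    moreover have "?A = X" using sv True unfolding S_def by simp
    ultimately show ?thesis using XY by auto
  next
    case False then have "v \<in> VY" using v(1) cover by auto
    then have "lab v \<in> X" using side_lab(2)[OF v(1)] by simp
    moreover have "?A = Y" using sv False unfolding S_def by simp
    ultimately show ?thesis using XY by auto
  qed
  have fp: "f (lab p) = lab p" using x0 v(3) unfolding f_def by simp
  have fv: "f (lab v) = lab v" using labv unfolding f_def by simp
  interpret GG: G V E VX VY X Y c r v ys0 p f f'
    by unfold_locales (use tree cover disj bip col XY X2 Y2 r v fA ff' fp fv in auto)
  let ?g = "gm v f"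
  have loc: "\<forall>w\<in>V. local_action E c ?g w (S w) = (\<lambda>x\<in>S w. x) \<or> (S w = S w0 \<and> local_action E c ?g w (S w) = m)"
  proof
    fix w assume w: "w \<in> V"
    show "local_action E c ?g w (S w) = (\<lambda>x\<in>S w. x) \<or> (S w = S w0 \<and> local_action E c ?g w (S w) = m)"
    proof (cases "below v w \<or> w = v")
      case False then show ?thesis using GG.local[OF w] by simp
    next
      case True
      show ?thesis
      proof (cases "S w = ?A")
        case True
        have "(\<lambda>x\<in>S w. if below v w \<or> w = v then f x else x) = (\<lambda>x\<in>S w. m x)"
          by (rule restrict_ext) (use \<open>below v w \<or> w = v\<close> True in \<open>simp add: f_def\<close>)
        then have "local_action E c ?g w (S w) = (\<lambda>x\<in>?A. m x)"
          using GG.local[OF w] True by simp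
        also have "\<dots> = m" using extm by (simp add: extensional_restrict)
        finally show ?thesis using True by simp
      next
        case False
        then have dis: "S w \<inter> ?A = {}" using S_XY[of w] AXY XY by auto
        have "(\<lambda>x\<in>S w. if below v w \<or> w = v then f x else x) = (\<lambda>x\<in>S w. x)"
          by (rule restrict_ext) (use dis in \<open>auto simp add: f_def\<close>)
        then have "local_action E c ?g w (S w) = (\<lambda>x\<in>S w. x)"
          using GG.local[OF w] by simp
        then show ?thesis by simp
      qed
    qed
  qed
  have fixF: "\<forall>y\<in>F. ?g y = y"
  proof
    fix y assume y: "y \<in> F"
    have "length (P y) \<le> Max (length ` P ` F)" using F(1) y by (intro Max_ge) auto
    then have "\<not> below v y" using below_len[of v y] v(4) unfolding n_def by linarith
    then show "?g y = y" by (rule GG.g_nb)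
  qed
  have x1v: "x1 \<in> S v" using sv x1 by simp
  define c1 where "c1 = nbr v x1"
  have ec1: "E v c1" and lc1: "lab c1 = x1" using nbr[OF v(1) x1v] c1_def by auto
  have c1V: "c1 \<in> V" using sg[OF ec1] by simp
  have x0x1: "x0 \<noteq> x1" using x0 x1 by auto
  have Pc1: "P c1 = P v @ [c1]"
    unfolding c1_def by (rule ext_lab[OF v(1) x1v]) (use v(2,3) x0x1 in \<open>simp add: nth_append\<close>)
  have bc1: "below v c1" using E1[OF v(1) c1V v(1) Pc1] by simp
  have Dc1: "D v c1 = [c1]" using E1D[OF v(1) c1V v(1) Pc1 bc1] by simp
  have fx1: "f x1 \<noteq> x1" using x1 unfolding f_def by simp
  have moved: "\<exists>y\<in>VY. ?g y \<noteq> y"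
  proof (cases "v \<in> VX")
    case True
    then have "c1 \<in> VY" using flip[OF ec1] c1V cover by auto
    moreover have "?g c1 \<noteq> c1"
    proof
      assume "?g c1 = c1"
      then have "f (lab (D v c1 ! 0)) = lab (D v c1 ! 0)" by (rule GG.fix_first[OF bc1])
      then show False using Dc1 lc1 fx1 by simp
    qed
    ultimately show ?thesis by blast
  next
    case False
    obtain xa xb where xab: "xa \<in> S c1" "xb \<in> S c1" "xa \<noteq> xb" using two_S by blast
    define x where "x = (if xa = lab v then xb else xa)"
    have xS: "x \<in> S c1" and xl: "x \<noteq> lab v" using xab unfolding x_def by auto
    define d where "d = nbr c1 x"
    have ed: "E c1 d" using nbr[OF c1V xS] d_def by auto
    have dV: "d \<in> V" using sg[OF ed] by simp
    have Pd: "P d = P c1 @ [d]"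
      unfolding d_def by (rule ext_lab[OF c1V xS]) (use Pc1 v(2) xl in \<open>simp add: nth_append\<close>)
    have c1v: "c1 \<noteq> v" using sg[OF ec1] by auto
    have bd: "below v d" using E1[OF c1V dV v(1) Pd] bc1 by simp
    have Dd: "D v d = [c1, d]" using E1D[OF c1V dV v(1) Pd bd] c1v Dc1 by simp
    have "d \<in> VY" using flip[OF ed] flip[OF ec1] False dV cover by auto
    moreover have "?g d \<noteq> d"
    proof
      assume "?g d = d"
      then have "f (lab (D v d ! 0)) = lab (D v d ! 0)" by (rule GG.fix_first[OF bd])
      then show False using Dd lc1 fx1 by simp
    qed
    ultimately show ?thesis by blast
  qed
  show ?thesis using GG.aut GG.gVX loc fixF moved by blast
qed

end

context T
begin

lemma build_T:
  assumes w0: "w0 \<in> V" and mB: "m \<in> Bij (S w0)" and x0: "x0 \<in> S w0" "m x0 = x0"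
    and x1: "x1 \<in> S w0" "m x1 \<noteq> x1" and F: "finite F" "F \<subseteq> V"
  shows "\<exists>g. g \<in> tree_aut V E \<and> g ` VX = VX \<and>
     (\<forall>w\<in>V. local_action E c g w (S w) = (\<lambda>x\<in>S w. x) \<or> (S w = S w0 \<and> local_action E c g w (S w) = m)) \<and>
     (\<forall>y\<in>F. g y = y) \<and> (\<exists>y\<in>VY. g y \<noteq> y)"
proof -
  interpret TR V E VX VY X Y c w0 by unfold_locales (rule w0)
  show ?thesis by (rule build[OF w0 mB x0 x1 F])
qed

lemma XneY: "X \<noteq> Y" using X2 XY by auto

lemma not_sr:
  assumes sM: "subgroup M (BijGroup X)" and sN: "subgroup N (BijGroup Y)"
    and w0: "w0 \<in> V" and K: "(S w0 = X \<and> K = M) \<or> (S w0 = Y \<and> K = N)"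
    and m: "m \<in> K" and x0: "x0 \<in> S w0" "m x0 = x0" and x1: "x1 \<in> S w0" "m x1 \<noteq> x1"
    and F: "finite F" "F \<subseteq> VY"
  shows "\<exists>h\<in>box_product V E VX VY X Y c M N. (\<forall>y\<in>F. h y = y) \<and> (\<exists>y\<in>VY. h y \<noteq> y)"
proof -
  have mB: "m \<in> Bij (S w0)"
    using K m subgroup.subset[OF sM] subgroup.subset[OF sN] by (auto simp: BijGroup_def)
  have FV: "F \<subseteq> V" using F cover by auto
  obtain g where g: "g \<in> tree_aut V E" "g ` VX = VX"
    "\<forall>w\<in>V. local_action E c g w (S w) = (\<lambda>x\<in>S w. x) \<or> (S w = S w0 \<and> local_action E c g w (S w) = m)"
    "\<forall>y\<in>F. g y = y" "\<exists>y\<in>VY. g y \<noteq> y"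
    using build_T[OF w0 mB x0 x1 F(1) FV] by blast
  have oneM: "(\<lambda>x\<in>X. x) \<in> M" using subgroup.one_closed[OF sM] by (simp add: BijGroup_def)
  have oneN: "(\<lambda>x\<in>Y. x) \<in> N" using subgroup.one_closed[OF sN] by (simp add: BijGroup_def)
  have "g \<in> U_c V E VX VY X Y c M N"
    unfolding U_c_def
  proof (intro CollectI conjI ballI)
    show "g \<in> tree_aut V E" "g ` VX = VX" using g by auto
  next
    fix w assume w: "w \<in> VX"
    then have wV: "w \<in> V" and Sw: "S w = X" using cover unfolding S_def by auto
    show "local_action E c g w X \<in> M" using g(3) wV Sw K m oneM XneY by fastforce
  next
    fix w assume w: "w \<in> VY"
    then have wV: "w \<in> V" and Sw: "S w = Y" using cover disj unfolding S_def by auto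
    show "local_action E c g w Y \<in> N" using g(3) wV Sw K m oneN XneY by fastforce
  qed
  then have "restrict g VY \<in> box_product V E VX VY X Y c M N" unfolding box_product_def by blast
  moreover have "\<forall>y\<in>F. restrict g VY y = y" using g(4) F(2) by auto
  moreover have "\<exists>y\<in>VY. restrict g VY y \<noteq> y" using g(5) by auto
  ultimately show ?thesis by blast
qed

lemma la_val: assumes "E w z" shows "local_action E c g w (S w) (lab z) = c (g w, g z)"
proof -
  have wV: "w \<in> V" using sg[OF assms] by simp
  have lS: "lab z \<in> S w" using lab_S[OF assms] .
  have inj: "inj_on c (arcs_out E w)" using Sbij[OF wV] bij_betw_imp_inj_on by metis
  have "(w, z) \<in> arcs_out E w" using assms by (simp add: arcs_out_def)
  moreover have "c (w, z) = lab z" using lab_eq[OF assms] by simp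
  ultimately have ti: "the_inv_into (arcs_out E w) c (lab z) = (w, z)" using the_inv_into_f_eq[OF inj] by metis
  show ?thesis unfolding local_action_def using lS ti by simp
qed

lemma fix_nbrs:
  assumes g: "g \<in> U_c V E VX VY X Y c M N" and sr: "semiregular M X" "semiregular N Y"
    and gw: "g w = w" and ez: "E w z" and gz: "g z = z" and ez': "E w z'"
  shows "g z' = z'"
proof -
  have wV: "w \<in> V" using sg[OF ez] by simp
  have aut: "g \<in> tree_aut V E" using g unfolding U_c_def by simp
  let ?la = "local_action E c g w (S w)"
  have K: "\<exists>K. ?la \<in> K \<and> semiregular K (S w)"
  proof (cases "w \<in> VX")
    case True then show ?thesis using g sr unfolding U_c_def S_def by auto
  next
    case False then have "w \<in> VY" using wV cover by auto
    then show ?thesis using g sr False unfolding U_c_def S_def by auto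
  qed
  then obtain K where K: "?la \<in> K" "semiregular K (S w)" by blast
  have "?la (lab z) = c (w, z)" using la_val[OF ez] gw gz by simp
  then have "?la (lab z) = lab z" using lab_eq[OF ez] by simp
  moreover have "lab z \<in> S w" using lab_S[OF ez] .
  ultimately have la1: "?la = (\<lambda>x\<in>S w. x)" using K unfolding semiregular_def by (auto simp: BijGroup_def)
  have z'V: "z' \<in> V" using sg[OF ez'] by simp
  have e2: "E w (g z')" using aut wV z'V ez' gw unfolding tree_aut_def by auto
  have "?la (lab z') = c (w, g z')" using la_val[OF ez'] gw by simp
  also have "\<dots> = lab (g z')" using lab_eq[OF e2] .
  finally have "lab (g z') = lab z'" using la1 lab_S[OF ez'] by simp
  then show ?thesis using lab_inj[OF e2 ez'] by simp
qed

lemma fix_all: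
  assumes g: "g \<in> U_c V E VX VY X Y c M N" and sr: "semiregular M X" "semiregular N Y"
    and eaw: "E a w" and ga: "g a = a" and gw: "g w = w" and u: "u \<in> V"
  shows "g u = u"
proof -
  have aV: "a \<in> V" using sg[OF eaw] by simp
  obtain xs where xs: "nb_path E xs" "hd xs = a" "last xs = u"
    using tree aV u unfolding is_tree_def by blast
  have ne: "xs \<noteq> []" using xs(1) nb_ne by blast
  have adj: "\<And>i. Suc i < length xs \<Longrightarrow> E (xs ! i) (xs ! Suc i)" using xs(1) unfolding nb_path_def by blast
  have x0: "xs ! 0 = a" using xs(2) ne by (simp add: hd_conv_nth)
  have "\<forall>i. i < length xs \<longrightarrow> g (xs ! i) = xs ! i \<and> (Suc i < length xs \<longrightarrow> g (xs ! Suc i) = xs ! Suc i)"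
  proof (intro allI)
    fix i show "i < length xs \<longrightarrow> g (xs ! i) = xs ! i \<and> (Suc i < length xs \<longrightarrow> g (xs ! Suc i) = xs ! Suc i)"
    proof (induction i)
      case 0
      have "Suc 0 < length xs \<Longrightarrow> g (xs ! Suc 0) = xs ! Suc 0"
        using fix_nbrs[OF g sr ga eaw gw] adj[of 0] x0 by simp
      then show ?case using x0 ga by simp
    next
      case (Suc i)
      show ?case
      proof (intro impI conjI)
        assume "Suc i < length xs"
        then show "g (xs ! Suc i) = xs ! Suc i" using Suc.IH by simp
      next
        assume h: "Suc (Suc i) < length xs"
        have e1: "E (xs ! Suc i) (xs ! i)" using sg[OF adj[of i]] h by simp
        have e2: "E (xs ! Suc i) (xs ! Suc (Suc i))" using adj h by simp
        have "g (xs ! i) = xs ! i" "g (xs ! Suc i) = xs ! Suc i" using Suc.IH h by auto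
        then show "g (xs ! Suc (Suc i)) = xs ! Suc (Suc i)" using fix_nbrs[OF g sr _ e1 _ e2] by simp
      qed
    qed
  qed
  moreover have "u = xs ! (length xs - 1)" using xs(3) ne by (simp add: last_conv_nth)
  ultimately show ?thesis using ne by simp
qed

lemma ex_VX: "\<exists>w. w \<in> VX"
proof -
  obtain t where t: "t \<in> V" using tree unfolding is_tree_def by blast
  show ?thesis
  proof (cases "t \<in> VX")
    case True then show ?thesis by blast
  next
    case False
    obtain x where x: "x \<in> S t" using S_ne[OF t] by blast
    have "E t (nbr t x)" using nbr[OF t x] by simp
    then have "nbr t x \<in> VX" using flip False by blast
    then show ?thesis by blast
  qed
qed

lemma ex_VY: "\<exists>w. w \<in> VY"
proof -
  obtain t where t: "t \<in> VX" using ex_VX by blast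
  then have tV: "t \<in> V" using cover by auto
  obtain x where x: "x \<in> S t" using S_ne[OF tV] by blast
  have e: "E t (nbr t x)" using nbr[OF tV x] by simp
  then have "nbr t x \<notin> VX" using flip t by blast
  then show ?thesis using sg[OF e] cover by blast
qed

lemma sr_disc:
  assumes sr: "semiregular M X" "semiregular N Y"
  shows "discrete_perm_group (box_product V E VX VY X Y c M N) VY"
proof -
  obtain w where w: "w \<in> VX" using ex_VX by blast
  then have wV: "w \<in> V" using cover by auto
  have Sw: "S w = X" using w unfolding S_def by simp
  obtain xa xb where xab: "xa \<in> S w" "xb \<in> S w" "xa \<noteq> xb" using X2 unfolding Sw by blast
  define a where "a = nbr w xa"
  define b where "b = nbr w xb"
  have ea: "E w a" and la: "lab a = xa" using nbr[OF wV xab(1)] a_def by auto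
  have eb: "E w b" and lb: "lab b = xb" using nbr[OF wV xab(2)] b_def by auto
  have ab: "a \<noteq> b" using la lb xab by auto
  have aY: "a \<in> VY" using flip[OF ea] w sg[OF ea] cover by auto
  have bY: "b \<in> VY" using flip[OF eb] w sg[OF eb] cover by auto
  have eaw: "E a w" using sg[OF ea] by simp
  show ?thesis unfolding discrete_perm_group_def
  proof (intro exI[of _ "{a, b}"] conjI ballI impI)
    show "finite {a, b}" by simp
    show "{a, b} \<subseteq> VY" using aY bY by simp
  next
    fix h y assume h: "h \<in> box_product V E VX VY X Y c M N" and hF: "\<forall>y\<in>{a, b}. h y = y" and y: "y \<in> VY"
    obtain g where g: "g \<in> U_c V E VX VY X Y c M N" and hg: "h = restrict g VY"
      using h unfolding box_product_def by blast
    have ga: "g a = a" and gb: "g b = b" using hF hg aY bY by auto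
    have aut: "g \<in> tree_aut V E" using g unfolding U_c_def by simp
    have pres: "\<forall>u\<in>V. \<forall>u'\<in>V. E u u' \<longleftrightarrow> E (g u) (g u')" using aut unfolding tree_aut_def by blast
    have aV: "a \<in> V" and bV: "b \<in> V" using sg[OF eaw] sg[OF eb] by auto
    have e1: "E (g a) (g w)" using pres aV wV eaw by blast
    have e2: "E (g w) (g b)" using pres bV wV eb by blast
    have e3: "E a (g w)" using e1 unfolding ga .
    have e4: "E (g w) b" using e2 unfolding gb .
    have "w = g w" by (rule common_nbr[OF eaw eb e3 e4 ab])
    then have gw: "g w = w" by simp
    have "y \<in> V" using y cover by auto
    then have "g y = y" using fix_all[OF g sr eaw ga gw] by simp
    then show "h y = y" using hg y by simp
  qed
qed

end

theorem theorem6p4: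
  fixes X Y :: "'a set" and M N :: "('a \<Rightarrow> 'a) set"
    and V VX VY :: "'v set" and E :: "'v \<Rightarrow> 'v \<Rightarrow> bool" and c :: "'v \<times> 'v \<Rightarrow> 'a"
  assumes "X \<inter> Y = {}"
    and "\<exists>a b. a \<in> X \<and> b \<in> X \<and> a \<noteq> b"
    and "\<exists>a b. a \<in> Y \<and> b \<in> Y \<and> a \<noteq> b"
    and "subgroup M (BijGroup X)" and "M \<noteq> {\<one>\<^bsub>BijGroup X\<^esub>}"
    and "subgroup N (BijGroup Y)" and "N \<noteq> {\<one>\<^bsub>BijGroup Y\<^esub>}"
    and "biregular_tree V E VX VY X Y"
    and "legal_colouring E VX VY X Y c"
  shows "discrete_perm_group (box_product V E VX VY X Y c M N) VY \<longleftrightarrow>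
         semiregular M X \<and> semiregular N Y"
proof -
  interpret T V E VX VY X Y c
    using assms(1-3,8,9) unfolding biregular_tree_def by unfold_locales auto
  have sM: "subgroup M (BijGroup X)" and sN: "subgroup N (BijGroup Y)" using assms by auto
  show ?thesis
  proof
    assume disc: "discrete_perm_group (box_product V E VX VY X Y c M N) VY"
    then obtain F where F: "finite F" "F \<subseteq> VY"
      and H: "\<forall>h\<in>box_product V E VX VY X Y c M N. (\<forall>y\<in>F. h y = y) \<longrightarrow> (\<forall>y\<in>VY. h y = y)"
      unfolding discrete_perm_group_def by blast
    have noh: "\<not> (\<exists>h\<in>box_product V E VX VY X Y c M N. (\<forall>y\<in>F. h y = y) \<and> (\<exists>y\<in>VY. h y \<noteq> y))"
      using H by blast
    have gen: "semiregular K (S w0)"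
      if w0: "w0 \<in> V" and K: "(S w0 = X \<and> K = M) \<or> (S w0 = Y \<and> K = N)" for w0 K
    proof (rule ccontr)
      assume "\<not> semiregular K (S w0)"
      then obtain x0 m where x0: "x0 \<in> S w0" and m: "m \<in> K" "m x0 = x0" and mne: "m \<noteq> (\<lambda>x\<in>S w0. x)"
        unfolding semiregular_def by (auto simp: BijGroup_def)
      have "m \<in> extensional (S w0)"
        using K m subgroup.subset[OF sM] subgroup.subset[OF sN] by (auto simp: BijGroup_def Bij_def)
      then obtain x1 where x1: "x1 \<in> S w0" "m x1 \<noteq> x1"
        using mne by (metis (no_types, lifting) extensionalityI restrict_apply' restrict_extensional)
      show False using not_sr[OF sM sN w0 K m(1) x0 m(2) x1 F] noh by blast
    qed
    obtain wx where wx: "wx \<in> VX" using ex_VX by blast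
    obtain wy where wy: "wy \<in> VY" using ex_VY by blast
    have "semiregular M X" using gen[of wx M] wx cover unfolding S_def by auto
    moreover have "semiregular N Y"
    proof -
      have "wy \<notin> VX" using wy disj by blast
      then have Sy: "S wy = Y" unfolding S_def by simp
      have "wy \<in> V" using wy cover by blast
      then show ?thesis using gen[of wy N] Sy by simp
    qed
    ultimately show "semiregular M X \<and> semiregular N Y" by blast
  next
    assume "semiregular M X \<and> semiregular N Y"
    then show "discrete_perm_group (box_product V E VX VY X Y c M N) VY" using sr_disc by blast
  qed
qed

end
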